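(* Let $(\mathcal{C},\mathbb{E},\mathfrak{s})$ be an extriangulated category with enough projective morphisms, and let $\mathbb{F}\subseteq\mathbb{E}$ be an additive subfunctor having enough injective morphisms. Then $\mathrm{Ph}(\mathbb{F})$ is a special precovering ideal.
   Context: An extriangulated category $(\mathcal{C},\mathbb{E},\mathfrak{s})$ (Nakaoka–Palu): additive $\mathcal{C}$, biadditive $\mathbb{E}:\mathcal{C}^{\mathrm{op}}\times\mathcal{C}\to\mathrm{Ab}$, additive realization $\mathfrak{s}$ assigning to each $\delta\in\mathbb{E}(C,A)$ an equivalence class of sequences $A\to B\to C$, forming $\mathbb{E}$-triangles $A\to B\to C\overset{\delta}{\dashrightarrow}$, satisfying (ET1)–(ET4), (ET3)$^{\mathrm{op}}$, (ET4)$^{\mathrm{op}}$. Notation: $a_\star\delta=\mathbb{E}(C,a)(\delta)$, $c^\star\delta=\mathbb{E}(c,A)(\delta)$. A morphism of $\mathbb{E}$-triangles from $A\to B\to C\overset{\delta}{\dashrightarrow}$ to $A'\to B'\to C'\overset{\delta'}{\dashrightarrow}$ is $(a,b,c)$ making the diagram commute with $a_\star\delta=c^\star\delta'$. Additive subfunctor $\mathbb{F}$: subgroups $\mathbb{F}(C,A)\subseteq\mathbb{E}(C,A)$ stable under $a_\star,c^\star$; $\mathbb{F}$-triangles have extension in $\mathbb{F}$. $\mathrm{Ph}(\mathbb{F})$: morphisms $\varphi:X\to C$ with $\varphi^\star\delta\in\mathbb{F}(X,A)$ for all $\delta\in\mathbb{E}(C,A)$ (an ideal). $\mathbb{F}\text{-}\mathrm{inj}$: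 morphisms $i:A\to Y$ with $i_\star\delta=0$ for all $\delta\in\mathbb{F}(C,A)$. $\mathbb{F}$ has enough injective morphisms if every $A$ admits an $\mathbb{F}$-triangle $A\xrightarrow{e}B\to C\overset{\delta}{\dashrightarrow}$ with $e\in\mathbb{F}\text{-}\mathrm{inj}$. $\mathcal{C}$ has enough projective morphisms if every $C$ admits an $\mathbb{E}$-triangle $K\to P\xrightarrow{p}C\overset{\gamma}{\dashrightarrow}$ with $p^\star\delta=0$ for all $\delta\in\mathbb{E}(C,A)$, all $A$. For an ideal $\mathcal{I}$, $\mathcal{I}^{\perp_{\mathbb{E}}}=\{g:A\to Y\mid m^\star g_\star\delta=0\ \forall m\in\mathcal{I},\,m:X\to C,\ \forall\delta\in\mathbb{E}(C,A)\}$. A special $\mathcal{I}$-precover of $C$ is $i:X\to C$ in $\mathcal{I}$ with $\mathbb{E}$-triangles $A\to B\to C\overset{\delta}{\dashrightarrow}$, $A'\to X\xrightarrow{i}C\overset{\delta'}{\dashrightarrow}$ and a morphism $(j,b,\mathrm{id}_C)$ between them with $j\in\mathcal{I}^{\perp_{\mathbb{E}}}$; $\mathcal{I}$ is special precovering if every object has one. *)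

theory Defs
  imports Main
begin

text \<open>Objects have type 'o, morphisms type 'm, extensions type 'e.
  cmp X g f is the composite g o f.  push X C a d is a_* d for d in E(C,A), a : A -> A'.
  pull X c A d is c^* d for d in E(C,A), c : C' -> C.
  rlz X C A d x y means that the sequence A -x-> B -y-> C belongs to the class s(d).\<close>

record ('o,'m,'e) ecat =
  Ob :: "'o set"
  Mor :: "'m set"
  src :: "'m \<Rightarrow> 'o"
  tgt :: "'m \<Rightarrow> 'o"
  cmp :: "'m \<Rightarrow> 'm \<Rightarrow> 'm"
  idt :: "'o \<Rightarrow> 'm"
  madd :: "'m \<Rightarrow> 'm \<Rightarrow> 'm"
  mzero :: "'o \<Rightarrow> 'o \<Rightarrow> 'm"
  Ext :: "'o \<Rightarrow> 'o \<Rightarrow> 'e set"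
  eadd :: "'o \<Rightarrow> 'o \<Rightarrow> 'e \<Rightarrow> 'e \<Rightarrow> 'e"
  ezero :: "'o \<Rightarrow> 'o \<Rightarrow> 'e"
  push :: "'o \<Rightarrow> 'm \<Rightarrow> 'e \<Rightarrow> 'e"
  pull :: "'m \<Rightarrow> 'o \<Rightarrow> 'e \<Rightarrow> 'e"
  rlz :: "'o \<Rightarrow> 'o \<Rightarrow> 'e \<Rightarrow> 'm \<Rightarrow> 'm \<Rightarrow> bool"

definition hom :: "('o,'m,'e) ecat \<Rightarrow> 'o \<Rightarrow> 'o \<Rightarrow> 'm set" where
  "hom X A B = {f \<in> Mor X. src X f = A \<and> tgt X f = B}"

definition is_iso :: "('o,'m,'e) ecat \<Rightarrow> 'o \<Rightarrow> 'o \<Rightarrow> 'm \<Rightarrow> bool" where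
  "is_iso X A B f \<longleftrightarrow> f \<in> hom X A B \<and>
     (\<exists>g\<in>hom X B A. cmp X g f = idt X A \<and> cmp X f g = idt X B)"

definition category :: "('o,'m,'e) ecat \<Rightarrow> bool" where
  "category X \<longleftrightarrow>
     (\<forall>f\<in>Mor X. src X f \<in> Ob X \<and> tgt X f \<in> Ob X) \<and>
     (\<forall>A\<in>Ob X. idt X A \<in> hom X A A) \<and>
     (\<forall>A B C. \<forall>f\<in>hom X A B. \<forall>g\<in>hom X B C. cmp X g f \<in> hom X A C) \<and>
     (\<forall>A B C D. \<forall>f\<in>hom X A B. \<forall>g\<in>hom X B C. \<forall>h\<in>hom X C D.
        cmp X h (cmp X g f) = cmp X (cmp X h g) f) \<and>
     (\<forall>A B. \<forall>f\<in>hom X A B. cmp X (idt X B) f = f \<and> cmp X f (idt X A) = f)"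

definition preadditive :: "('o,'m,'e) ecat \<Rightarrow> bool" where
  "preadditive X \<longleftrightarrow> category X \<and>
     (\<forall>A\<in>Ob X. \<forall>B\<in>Ob X.
        mzero X A B \<in> hom X A B \<and>
        (\<forall>f\<in>hom X A B. \<forall>g\<in>hom X A B. madd X f g \<in> hom X A B) \<and>
        (\<forall>f\<in>hom X A B. \<forall>g\<in>hom X A B. \<forall>h\<in>hom X A B.
           madd X (madd X f g) h = madd X f (madd X g h)) \<and>
        (\<forall>f\<in>hom X A B. \<forall>g\<in>hom X A B. madd X f g = madd X g f) \<and>
        (\<forall>f\<in>hom X A B. madd X (mzero X A B) f = f) \<and>
        (\<forall>f\<in>hom X A B. \<exists>g\<in>hom X A B. madd X f g = mzero X A B)) \<and>
     (\<forall>A B C. \<forall>f\<in>hom X A B. \<forall>f'\<in>hom X A B. \<forall>g\<in>hom X B C.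
        cmp X g (madd X f f') = madd X (cmp X g f) (cmp X g f')) \<and>
     (\<forall>A B C. \<forall>f\<in>hom X A B. \<forall>g\<in>hom X B C. \<forall>g'\<in>hom X B C.
        cmp X (madd X g g') f = madd X (cmp X g f) (cmp X g' f))"

definition biproduct :: "('o,'m,'e) ecat \<Rightarrow> 'o \<Rightarrow> 'o \<Rightarrow> 'o \<Rightarrow> 'm \<Rightarrow> 'm \<Rightarrow> 'm \<Rightarrow> 'm \<Rightarrow> bool" where
  "biproduct X A B S p1 p2 i1 i2 \<longleftrightarrow> S \<in> Ob X \<and>
     p1 \<in> hom X S A \<and> p2 \<in> hom X S B \<and> i1 \<in> hom X A S \<and> i2 \<in> hom X B S \<and>
     cmp X p1 i1 = idt X A \<and> cmp X p2 i2 = idt X B \<and>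
     cmp X p2 i1 = mzero X A B \<and> cmp X p1 i2 = mzero X B A \<and>
     madd X (cmp X i1 p1) (cmp X i2 p2) = idt X S"

definition additive :: "('o,'m,'e) ecat \<Rightarrow> bool" where
  "additive X \<longleftrightarrow> preadditive X \<and>
     (\<exists>Z\<in>Ob X. \<forall>A\<in>Ob X. (\<exists>!f. f \<in> hom X Z A) \<and> (\<exists>!f. f \<in> hom X A Z)) \<and>
     (\<forall>A\<in>Ob X. \<forall>B\<in>Ob X. \<exists>S p1 p2 i1 i2. biproduct X A B S p1 p2 i1 i2)"

definition biadditive_Ext :: "('o,'m,'e) ecat \<Rightarrow> bool" where
  "biadditive_Ext X \<longleftrightarrow>
     (\<forall>C\<in>Ob X. \<forall>A\<in>Ob X.
        ezero X C A \<in> Ext X C A \<and>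
        (\<forall>d\<in>Ext X C A. \<forall>d'\<in>Ext X C A. eadd X C A d d' \<in> Ext X C A) \<and>
        (\<forall>d\<in>Ext X C A. \<forall>d'\<in>Ext X C A. \<forall>d''\<in>Ext X C A.
           eadd X C A (eadd X C A d d') d'' = eadd X C A d (eadd X C A d' d'')) \<and>
        (\<forall>d\<in>Ext X C A. \<forall>d'\<in>Ext X C A. eadd X C A d d' = eadd X C A d' d) \<and>
        (\<forall>d\<in>Ext X C A. eadd X C A (ezero X C A) d = d) \<and>
        (\<forall>d\<in>Ext X C A. \<exists>d'\<in>Ext X C A. eadd X C A d d' = ezero X C A)) \<and>
     (\<forall>C\<in>Ob X. \<forall>A A'. \<forall>a\<in>hom X A A'. \<forall>d\<in>Ext X C A.
        push X C a d \<in> Ext X C A' \<and>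
        (\<forall>d'\<in>Ext X C A. push X C a (eadd X C A d d') = eadd X C A' (push X C a d) (push X C a d')) \<and>
        (\<forall>b\<in>hom X A A'. push X C (madd X a b) d = eadd X C A' (push X C a d) (push X C b d)) \<and>
        (\<forall>A''. \<forall>a'\<in>hom X A' A''. push X C (cmp X a' a) d = push X C a' (push X C a d))) \<and>
     (\<forall>C\<in>Ob X. \<forall>A\<in>Ob X. \<forall>d\<in>Ext X C A. push X C (idt X A) d = d) \<and>
     (\<forall>A\<in>Ob X. \<forall>C C'. \<forall>c\<in>hom X C' C. \<forall>d\<in>Ext X C A.
        pull X c A d \<in> Ext X C' A \<and>
        (\<forall>d'\<in>Ext X C A. pull X c A (eadd X C A d d') = eadd X C' A (pull X c A d) (pull X c A d')) \<and>
        (\<forall>c'\<in>hom X C' C. pull X (madd X c c') A d = eadd X C' A (pull X c A d) (pull X c' A d)) \<and>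
        (\<forall>C''. \<forall>c'\<in>hom X C'' C'. pull X (cmp X c c') A d = pull X c' A (pull X c A d))) \<and>
     (\<forall>C\<in>Ob X. \<forall>A\<in>Ob X. \<forall>d\<in>Ext X C A. pull X (idt X C) A d = d) \<and>
     (\<forall>A A' C C'. \<forall>a\<in>hom X A A'. \<forall>c\<in>hom X C' C. \<forall>d\<in>Ext X C A.
        push X C' a (pull X c A d) = pull X c A' (push X C a d))"

definition seq_equiv :: "('o,'m,'e) ecat \<Rightarrow> 'm \<Rightarrow> 'm \<Rightarrow> 'm \<Rightarrow> 'm \<Rightarrow> bool" where
  "seq_equiv X x y x' y' \<longleftrightarrow>
     (\<exists>b. is_iso X (tgt X x) (tgt X x') b \<and> cmp X b x = x' \<and> cmp X y' b = y)"

definition realization :: "('o,'m,'e) ecat \<Rightarrow> bool" where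
  "realization X \<longleftrightarrow>
     (\<forall>C A d x y. rlz X C A d x y \<longrightarrow> C \<in> Ob X \<and> A \<in> Ob X \<and> d \<in> Ext X C A \<and>
        (\<exists>B\<in>Ob X. x \<in> hom X A B \<and> y \<in> hom X B C)) \<and>
     (\<forall>C\<in>Ob X. \<forall>A\<in>Ob X. \<forall>d\<in>Ext X C A.
        (\<exists>x y. rlz X C A d x y) \<and>
        (\<forall>x y x' y'. rlz X C A d x y \<and> rlz X C A d x' y' \<longrightarrow> seq_equiv X x y x' y') \<and>
        (\<forall>x y x' y'. rlz X C A d x y \<and> (\<exists>B'\<in>Ob X. x' \<in> hom X A B' \<and> y' \<in> hom X B' C) \<and>
            seq_equiv X x y x' y' \<longrightarrow> rlz X C A d x' y')) \<and>
     (\<forall>A C A' C' d d' a c x y x' y'.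
        d \<in> Ext X C A \<and> d' \<in> Ext X C' A' \<and> a \<in> hom X A A' \<and> c \<in> hom X C C' \<and>
        push X C a d = pull X c A' d' \<and> rlz X C A d x y \<and> rlz X C' A' d' x' y' \<longrightarrow>
        (\<exists>b\<in>hom X (tgt X x) (tgt X x'). cmp X b x = cmp X x' a \<and> cmp X y' b = cmp X c y))"

definition ET2 :: "('o,'m,'e) ecat \<Rightarrow> bool" where
  "ET2 X \<longleftrightarrow>
     (\<forall>A\<in>Ob X. \<forall>C\<in>Ob X. \<forall>S p1 p2 i1 i2.
        biproduct X A C S p1 p2 i1 i2 \<longrightarrow> rlz X C A (ezero X C A) i1 p2) \<and>
     (\<forall>A A' C C' d d' SA pA1 pA2 iA1 iA2 SC pC1 pC2 iC1 iC2 th x y x' y' SB pB1 pB2 iB1 iB2.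
        A \<in> Ob X \<and> A' \<in> Ob X \<and> C \<in> Ob X \<and> C' \<in> Ob X \<and>
        d \<in> Ext X C A \<and> d' \<in> Ext X C' A' \<and>
        biproduct X A A' SA pA1 pA2 iA1 iA2 \<and> biproduct X C C' SC pC1 pC2 iC1 iC2 \<and>
        th \<in> Ext X SC SA \<and>
        push X C pA1 (pull X iC1 SA th) = d \<and>
        push X C' pA2 (pull X iC2 SA th) = d' \<and>
        push X C pA2 (pull X iC1 SA th) = ezero X C A' \<and>
        push X C' pA1 (pull X iC2 SA th) = ezero X C' A \<and>
        rlz X C A d x y \<and> rlz X C' A' d' x' y' \<and>
        biproduct X (tgt X x) (tgt X x') SB pB1 pB2 iB1 iB2 \<longrightarrow>
        rlz X SC SA th
          (madd X (cmp X iB1 (cmp X x pA1)) (cmp X iB2 (cmp X x' pA2)))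
          (madd X (cmp X iC1 (cmp X y pB1)) (cmp X iC2 (cmp X y' pB2))))"

definition etri :: "('o,'m,'e) ecat \<Rightarrow> 'o \<Rightarrow> 'o \<Rightarrow> 'o \<Rightarrow> 'm \<Rightarrow> 'm \<Rightarrow> 'e \<Rightarrow> bool" where
  "etri X A B C x y d \<longleftrightarrow> A \<in> Ob X \<and> B \<in> Ob X \<and> C \<in> Ob X \<and> d \<in> Ext X C A \<and>
     x \<in> hom X A B \<and> y \<in> hom X B C \<and> rlz X C A d x y"

definition ET3 :: "('o,'m,'e) ecat \<Rightarrow> bool" where
  "ET3 X \<longleftrightarrow> (\<forall>A B C x y d A' B' C' x' y' d' a b.
     etri X A B C x y d \<and> etri X A' B' C' x' y' d' \<and> a \<in> hom X A A' \<and> b \<in> hom X B B' \<and>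
     cmp X b x = cmp X x' a \<longrightarrow>
     (\<exists>c\<in>hom X C C'. cmp X c y = cmp X y' b \<and> push X C a d = pull X c A' d'))"

definition ET3op :: "('o,'m,'e) ecat \<Rightarrow> bool" where
  "ET3op X \<longleftrightarrow> (\<forall>A B C x y d A' B' C' x' y' d' b c.
     etri X A B C x y d \<and> etri X A' B' C' x' y' d' \<and> b \<in> hom X B B' \<and> c \<in> hom X C C' \<and>
     cmp X y' b = cmp X c y \<longrightarrow>
     (\<exists>a\<in>hom X A A'. cmp X b x = cmp X x' a \<and> push X C a d = pull X c A' d'))"

definition ET4 :: "('o,'m,'e) ecat \<Rightarrow> bool" where
  "ET4 X \<longleftrightarrow> (\<forall>A B D f f' d C F g g' d'.
     etri X A B D f f' d \<and> etri X B C F g g' d' \<longrightarrow>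
     (\<exists>E\<in>Ob X. \<exists>h h' dd e d''.
        etri X A C E h h' d'' \<and> dd \<in> hom X D E \<and> e \<in> hom X E F \<and>
        h = cmp X g f \<and> cmp X dd f' = cmp X h' g \<and> cmp X e h' = g' \<and>
        etri X D E F dd e (push X F f' d') \<and>
        pull X dd A d'' = d \<and>
        push X E f d'' = pull X e B d'))"

definition ET4op :: "('o,'m,'e) ecat \<Rightarrow> bool" where
  "ET4op X \<longleftrightarrow> (\<forall>D A B f' f d F C g' g d'.
     etri X D A B f' f d \<and> etri X F B C g' g d' \<longrightarrow>
     (\<exists>E\<in>Ob X. \<exists>dd e h' h d''.
        etri X E A C h' h d'' \<and> dd \<in> hom X D E \<and> e \<in> hom X E F \<and>
        h = cmp X g f \<and> f' = cmp X h' dd \<and> cmp X g' e = cmp X f h' \<and>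
        etri X D E F dd e (pull X g' D d) \<and>
        d' = push X C e d'' \<and>
        push X B dd d = pull X g E d''))"

definition extriangulated :: "('o,'m,'e) ecat \<Rightarrow> bool" where
  "extriangulated X \<longleftrightarrow> additive X \<and> biadditive_Ext X \<and> realization X \<and> ET2 X \<and>
     ET3 X \<and> ET3op X \<and> ET4 X \<and> ET4op X"

definition additive_subfunctor :: "('o,'m,'e) ecat \<Rightarrow> ('o \<Rightarrow> 'o \<Rightarrow> 'e set) \<Rightarrow> bool" where
  "additive_subfunctor X Fs \<longleftrightarrow>
     (\<forall>C\<in>Ob X. \<forall>A\<in>Ob X. Fs C A \<subseteq> Ext X C A \<and> ezero X C A \<in> Fs C A \<and>
        (\<forall>d\<in>Fs C A. \<forall>d'\<in>Fs C A. eadd X C A d d' \<in> Fs C A) \<and>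
        (\<forall>d\<in>Fs C A. \<exists>d'\<in>Fs C A. eadd X C A d d' = ezero X C A)) \<and>
     (\<forall>C\<in>Ob X. \<forall>A A'. \<forall>a\<in>hom X A A'. \<forall>d\<in>Fs C A. push X C a d \<in> Fs C A') \<and>
     (\<forall>A\<in>Ob X. \<forall>C C'. \<forall>c\<in>hom X C' C. \<forall>d\<in>Fs C A. pull X c A d \<in> Fs C' A)"

definition Ph :: "('o,'m,'e) ecat \<Rightarrow> ('o \<Rightarrow> 'o \<Rightarrow> 'e set) \<Rightarrow> 'm set" where
  "Ph X Fs = {phi \<in> Mor X. \<forall>A\<in>Ob X. \<forall>d\<in>Ext X (tgt X phi) A.
     pull X phi A d \<in> Fs (src X phi) A}"

definition F_inj :: "('o,'m,'e) ecat \<Rightarrow> ('o \<Rightarrow> 'o \<Rightarrow> 'e set) \<Rightarrow> 'm set" where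
  "F_inj X Fs = {i \<in> Mor X. \<forall>C\<in>Ob X. \<forall>d\<in>Fs C (src X i).
     push X C i d = ezero X C (tgt X i)}"

definition enough_injective_morphisms :: "('o,'m,'e) ecat \<Rightarrow> ('o \<Rightarrow> 'o \<Rightarrow> 'e set) \<Rightarrow> bool" where
  "enough_injective_morphisms X Fs \<longleftrightarrow> (\<forall>A\<in>Ob X. \<exists>B C e y d.
     etri X A B C e y d \<and> d \<in> Fs C A \<and> e \<in> F_inj X Fs)"

definition enough_projective_morphisms :: "('o,'m,'e) ecat \<Rightarrow> bool" where
  "enough_projective_morphisms X \<longleftrightarrow> (\<forall>C\<in>Ob X. \<exists>K P k p g.
     etri X K P C k p g \<and> (\<forall>A\<in>Ob X. \<forall>d\<in>Ext X C A. pull X p A d = ezero X P A))"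

definition ideal :: "('o,'m,'e) ecat \<Rightarrow> 'm set \<Rightarrow> bool" where
  "ideal X I \<longleftrightarrow> I \<subseteq> Mor X \<and>
     (\<forall>A\<in>Ob X. \<forall>B\<in>Ob X. mzero X A B \<in> I) \<and>
     (\<forall>A B. \<forall>f\<in>hom X A B. \<forall>g\<in>hom X A B. f \<in> I \<and> g \<in> I \<longrightarrow> madd X f g \<in> I) \<and>
     (\<forall>f\<in>I. \<forall>g\<in>Mor X. src X g = tgt X f \<longrightarrow> cmp X g f \<in> I) \<and>
     (\<forall>f\<in>I. \<forall>g\<in>Mor X. tgt X g = src X f \<longrightarrow> cmp X f g \<in> I)"

definition perpE :: "('o,'m,'e) ecat \<Rightarrow> 'm set \<Rightarrow> 'm set" where
  "perpE X I = {g \<in> Mor X. \<forall>m\<in>I. \<forall>d\<in>Ext X (tgt X m) (src X g).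
     pull X m (tgt X g) (push X (tgt X m) g d) = ezero X (src X m) (tgt X g)}"

definition special_precover :: "('o,'m,'e) ecat \<Rightarrow> 'm set \<Rightarrow> 'o \<Rightarrow> 'm \<Rightarrow> bool" where
  "special_precover X I C i \<longleftrightarrow> i \<in> I \<and> tgt X i = C \<and>
     (\<exists>A B x y d A' x' d' j b.
        etri X A B C x y d \<and> etri X A' (src X i) C x' i d' \<and>
        j \<in> hom X A A' \<and> b \<in> hom X B (src X i) \<and>
        cmp X b x = cmp X x' j \<and> cmp X i b = cmp X (idt X C) y \<and>
        push X C j d = pull X (idt X C) A' d' \<and>
        j \<in> perpE X I)"

definition special_precovering_ideal :: "('o,'m,'e) ecat \<Rightarrow> 'm set \<Rightarrow> bool" where
  "special_precovering_ideal X I \<longleftrightarrow> ideal X I \<and> (\<forall>C\<in>Ob X. \<exists>i. special_precover X I C i)"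

end

theory Submission
  imports Defs
begin

context
  fixes X :: "('o,'m,'e) ecat"
  assumes ext: "extriangulated X"
begin

lemma catX: "category X"
  using ext unfolding extriangulated_def additive_def preadditive_def by blast

lemma mor_ob: "f \<in> Mor X \<Longrightarrow> src X f \<in> Ob X \<and> tgt X f \<in> Ob X"
  using catX unfolding category_def by blast

lemma hom_ob: "f \<in> hom X A B \<Longrightarrow> A \<in> Ob X \<and> B \<in> Ob X"
  using mor_ob unfolding hom_def by blast

lemma idt_hom: "A \<in> Ob X \<Longrightarrow> idt X A \<in> hom X A A"
  using catX unfolding category_def by blast

lemma cmp_hom: "f \<in> hom X A B \<Longrightarrow> g \<in> hom X B C \<Longrightarrow> cmp X g f \<in> hom X A C"
  using catX unfolding category_def by blast

lemma assoc: "f \<in> hom X A B \<Longrightarrow> g \<in> hom X B C \<Longrightarrow> h \<in> hom X C D \<Longrightarrow>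
   cmp X h (cmp X g f) = cmp X (cmp X h g) f"
  using catX unfolding category_def by blast

lemma idl: "f \<in> hom X A B \<Longrightarrow> cmp X (idt X B) f = f"
  using catX unfolding category_def by blast

lemma idr: "f \<in> hom X A B \<Longrightarrow> cmp X f (idt X A) = f"
  using catX unfolding category_def by blast

lemma preX: "preadditive X"
  using ext unfolding extriangulated_def additive_def by blast

lemma mzero_hom: "A \<in> Ob X \<Longrightarrow> B \<in> Ob X \<Longrightarrow> mzero X A B \<in> hom X A B"
  using preX unfolding preadditive_def by blast

lemma madd_hom: assumes "f \<in> hom X A B" "g \<in> hom X A B" shows "madd X f g \<in> hom X A B"
proof -
  have "A \<in> Ob X" "B \<in> Ob X" using hom_ob assms by auto
  thus ?thesis using preX assms unfolding preadditive_def by (elim conjE) (drule bspec, assumption, drule bspec, assumption, elim conjE, blast)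
qed

lemma madd_zero: assumes "f \<in> hom X A B" shows "madd X (mzero X A B) f = f"
proof -
  have "A \<in> Ob X" "B \<in> Ob X" using hom_ob assms by auto
  thus ?thesis using preX assms unfolding preadditive_def by (elim conjE) (drule bspec, assumption, drule bspec, assumption, elim conjE, blast)
qed

lemma biprod_ex: "A \<in> Ob X \<Longrightarrow> B \<in> Ob X \<Longrightarrow> \<exists>S p1 p2 i1 i2. biproduct X A B S p1 p2 i1 i2"
  using ext unfolding extriangulated_def additive_def by blast

lemma biaX: "biadditive_Ext X"
  using ext unfolding extriangulated_def by blast

lemma bia1: "\<forall>C\<in>Ob X. \<forall>A\<in>Ob X.
        ezero X C A \<in> Ext X C A \<and>
        (\<forall>d\<in>Ext X C A. \<forall>d'\<in>Ext X C A. eadd X C A d d' \<in> Ext X C A) \<and>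
        (\<forall>d\<in>Ext X C A. \<forall>d'\<in>Ext X C A. \<forall>d''\<in>Ext X C A.
           eadd X C A (eadd X C A d d') d'' = eadd X C A d (eadd X C A d' d'')) \<and>
        (\<forall>d\<in>Ext X C A. \<forall>d'\<in>Ext X C A. eadd X C A d d' = eadd X C A d' d) \<and>
        (\<forall>d\<in>Ext X C A. eadd X C A (ezero X C A) d = d) \<and>
        (\<forall>d\<in>Ext X C A. \<exists>d'\<in>Ext X C A. eadd X C A d d' = ezero X C A)"
  using biaX unfolding biadditive_Ext_def by (elim conjE) assumption

lemma bia2: "\<forall>C\<in>Ob X. \<forall>A A'. \<forall>a\<in>hom X A A'. \<forall>d\<in>Ext X C A.
        push X C a d \<in> Ext X C A' \<and>
        (\<forall>d'\<in>Ext X C A. push X C a (eadd X C A d d') = eadd X C A' (push X C a d) (push X C a d')) \<and>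
        (\<forall>b\<in>hom X A A'. push X C (madd X a b) d = eadd X C A' (push X C a d) (push X C b d)) \<and>
        (\<forall>A''. \<forall>a'\<in>hom X A' A''. push X C (cmp X a' a) d = push X C a' (push X C a d))"
  using biaX unfolding biadditive_Ext_def by (elim conjE) assumption

lemma bia3: "\<forall>C\<in>Ob X. \<forall>A\<in>Ob X. \<forall>d\<in>Ext X C A. push X C (idt X A) d = d"
  using biaX unfolding biadditive_Ext_def by (elim conjE) assumption

lemma bia4: "\<forall>A\<in>Ob X. \<forall>C C'. \<forall>c\<in>hom X C' C. \<forall>d\<in>Ext X C A.
        pull X c A d \<in> Ext X C' A \<and>
        (\<forall>d'\<in>Ext X C A. pull X c A (eadd X C A d d') = eadd X C' A (pull X c A d) (pull X c A d')) \<and>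
        (\<forall>c'\<in>hom X C' C. pull X (madd X c c') A d = eadd X C' A (pull X c A d) (pull X c' A d)) \<and>
        (\<forall>C''. \<forall>c'\<in>hom X C'' C'. pull X (cmp X c c') A d = pull X c' A (pull X c A d))"
  using biaX unfolding biadditive_Ext_def by (elim conjE) assumption

lemma bia5: "\<forall>C\<in>Ob X. \<forall>A\<in>Ob X. \<forall>d\<in>Ext X C A. pull X (idt X C) A d = d"
  using biaX unfolding biadditive_Ext_def by (elim conjE) assumption

lemma bia6: "\<forall>A A' C C'. \<forall>a\<in>hom X A A'. \<forall>c\<in>hom X C' C. \<forall>d\<in>Ext X C A.
        push X C' a (pull X c A d) = pull X c A' (push X C a d)"
  using biaX unfolding biadditive_Ext_def by (elim conjE) assumption

lemma ezero_ext: "C \<in> Ob X \<Longrightarrow> A \<in> Ob X \<Longrightarrow> ezero X C A \<in> Ext X C A"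
  using bia1 by blast

lemma eadd_ext: "C \<in> Ob X \<Longrightarrow> A \<in> Ob X \<Longrightarrow> d \<in> Ext X C A \<Longrightarrow> d' \<in> Ext X C A \<Longrightarrow> eadd X C A d d' \<in> Ext X C A"
  using bia1 by blast

lemma eadd_assoc: "C \<in> Ob X \<Longrightarrow> A \<in> Ob X \<Longrightarrow> d \<in> Ext X C A \<Longrightarrow> d' \<in> Ext X C A \<Longrightarrow> d'' \<in> Ext X C A \<Longrightarrow>
   eadd X C A (eadd X C A d d') d'' = eadd X C A d (eadd X C A d' d'')"
  using bia1 by blast

lemma eadd_comm: "C \<in> Ob X \<Longrightarrow> A \<in> Ob X \<Longrightarrow> d \<in> Ext X C A \<Longrightarrow> d' \<in> Ext X C A \<Longrightarrow>
   eadd X C A d d' = eadd X C A d' d"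
  using bia1 by blast

lemma eadd_zero: "C \<in> Ob X \<Longrightarrow> A \<in> Ob X \<Longrightarrow> d \<in> Ext X C A \<Longrightarrow> eadd X C A (ezero X C A) d = d"
  using bia1 by blast

lemma eadd_inv: "C \<in> Ob X \<Longrightarrow> A \<in> Ob X \<Longrightarrow> d \<in> Ext X C A \<Longrightarrow> \<exists>d'\<in>Ext X C A. eadd X C A d d' = ezero X C A"
  using bia1 by blast

lemma push_ext: "C \<in> Ob X \<Longrightarrow> a \<in> hom X A A' \<Longrightarrow> d \<in> Ext X C A \<Longrightarrow> push X C a d \<in> Ext X C A'"
  using bia2 by blast

lemma push_add: "C \<in> Ob X \<Longrightarrow> a \<in> hom X A A' \<Longrightarrow> d \<in> Ext X C A \<Longrightarrow> d' \<in> Ext X C A \<Longrightarrow>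
   push X C a (eadd X C A d d') = eadd X C A' (push X C a d) (push X C a d')"
  using bia2 by blast

lemma push_id: "C \<in> Ob X \<Longrightarrow> A \<in> Ob X \<Longrightarrow> d \<in> Ext X C A \<Longrightarrow> push X C (idt X A) d = d"
  using bia3 by blast

lemma pull_ext: "A \<in> Ob X \<Longrightarrow> c \<in> hom X C' C \<Longrightarrow> d \<in> Ext X C A \<Longrightarrow> pull X c A d \<in> Ext X C' A"
  using bia4 by blast

lemma pull_madd: "A \<in> Ob X \<Longrightarrow> c \<in> hom X C' C \<Longrightarrow> c' \<in> hom X C' C \<Longrightarrow> d \<in> Ext X C A \<Longrightarrow>
   pull X (madd X c c') A d = eadd X C' A (pull X c A d) (pull X c' A d)"
  using bia4 by blast

lemma pull_cmp: "A \<in> Ob X \<Longrightarrow> c \<in> hom X C' C \<Longrightarrow> c' \<in> hom X C'' C' \<Longrightarrow> d \<in> Ext X C A \<Longrightarrow>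
   pull X (cmp X c c') A d = pull X c' A (pull X c A d)"
  using bia4 by blast

lemma pull_id: "C \<in> Ob X \<Longrightarrow> A \<in> Ob X \<Longrightarrow> d \<in> Ext X C A \<Longrightarrow> pull X (idt X C) A d = d"
  using bia5 by blast

lemma push_pull: "a \<in> hom X A A' \<Longrightarrow> c \<in> hom X C' C \<Longrightarrow> d \<in> Ext X C A \<Longrightarrow>
   push X C' a (pull X c A d) = pull X c A' (push X C a d)"
  using bia6 by blast

lemma realX: "realization X"
  using ext unfolding extriangulated_def by blast

lemma real1: "\<forall>C A d x y. rlz X C A d x y \<longrightarrow> C \<in> Ob X \<and> A \<in> Ob X \<and> d \<in> Ext X C A \<and>
        (\<exists>B\<in>Ob X. x \<in> hom X A B \<and> y \<in> hom X B C)"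
  using realX unfolding realization_def by (elim conjE) assumption

lemma real2: "\<forall>C\<in>Ob X. \<forall>A\<in>Ob X. \<forall>d\<in>Ext X C A.
        (\<exists>x y. rlz X C A d x y) \<and>
        (\<forall>x y x' y'. rlz X C A d x y \<and> rlz X C A d x' y' \<longrightarrow> seq_equiv X x y x' y') \<and>
        (\<forall>x y x' y'. rlz X C A d x y \<and> (\<exists>B'\<in>Ob X. x' \<in> hom X A B' \<and> y' \<in> hom X B' C) \<and>
            seq_equiv X x y x' y' \<longrightarrow> rlz X C A d x' y')"
  using realX unfolding realization_def by (elim conjE) assumption

lemma real3: "\<forall>A C A' C' d d' a c x y x' y'.
        d \<in> Ext X C A \<and> d' \<in> Ext X C' A' \<and> a \<in> hom X A A' \<and> c \<in> hom X C C' \<and>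
        push X C a d = pull X c A' d' \<and> rlz X C A d x y \<and> rlz X C' A' d' x' y' \<longrightarrow>
        (\<exists>b\<in>hom X (tgt X x) (tgt X x'). cmp X b x = cmp X x' a \<and> cmp X y' b = cmp X c y)"
  using realX unfolding realization_def by (elim conjE) assumption

lemma rlz_props: "rlz X C A d x y \<Longrightarrow> C \<in> Ob X \<and> A \<in> Ob X \<and> d \<in> Ext X C A \<and>
        (\<exists>B\<in>Ob X. x \<in> hom X A B \<and> y \<in> hom X B C)"
  using real1 by blast

lemma rlz_ex: "C \<in> Ob X \<Longrightarrow> A \<in> Ob X \<Longrightarrow> d \<in> Ext X C A \<Longrightarrow> \<exists>x y. rlz X C A d x y"
  using real2 by blast

lemma rlz_mor: "d \<in> Ext X C A \<Longrightarrow> d' \<in> Ext X C' A' \<Longrightarrow> a \<in> hom X A A' \<Longrightarrow> c \<in> hom X C C' \<Longrightarrow>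
        push X C a d = pull X c A' d' \<Longrightarrow> rlz X C A d x y \<Longrightarrow> rlz X C' A' d' x' y' \<Longrightarrow>
        (\<exists>b\<in>hom X (tgt X x) (tgt X x'). cmp X b x = cmp X x' a \<and> cmp X y' b = cmp X c y)"
  using real3 by blast

lemma split_rlz: "A \<in> Ob X \<Longrightarrow> C \<in> Ob X \<Longrightarrow> biproduct X A C S p1 p2 i1 i2 \<Longrightarrow> rlz X C A (ezero X C A) i1 p2"
  using ext unfolding extriangulated_def ET2_def by blast

lemma et3: "etri X A B C x y d \<Longrightarrow> etri X A' B' C' x' y' d' \<Longrightarrow> a \<in> hom X A A' \<Longrightarrow> b \<in> hom X B B' \<Longrightarrow>
     cmp X b x = cmp X x' a \<Longrightarrow>
     (\<exists>c\<in>hom X C C'. cmp X c y = cmp X y' b \<and> push X C a d = pull X c A' d')"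
  using ext unfolding extriangulated_def ET3_def by blast

lemma et3op: "etri X A B C x y d \<Longrightarrow> etri X A' B' C' x' y' d' \<Longrightarrow> b \<in> hom X B B' \<Longrightarrow> c \<in> hom X C C' \<Longrightarrow>
     cmp X y' b = cmp X c y \<Longrightarrow>
     (\<exists>a\<in>hom X A A'. cmp X b x = cmp X x' a \<and> push X C a d = pull X c A' d')"
  using ext unfolding extriangulated_def ET3op_def by blast

lemma etri_ex: "C \<in> Ob X \<Longrightarrow> A \<in> Ob X \<Longrightarrow> d \<in> Ext X C A \<Longrightarrow> \<exists>B x y. etri X A B C x y d"
  using rlz_ex rlz_props unfolding etri_def by blast

lemma etri_rlz: "etri X A B C x y d \<Longrightarrow> rlz X C A d x y"
  unfolding etri_def by blast

lemma ext_cancel: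
  assumes C: "C \<in> Ob X" and A: "A \<in> Ob X" and u: "u \<in> Ext X C A" and uu: "eadd X C A u u = u"
  shows "u = ezero X C A"
proof -
  obtain u' where u': "u' \<in> Ext X C A" "eadd X C A u u' = ezero X C A" using eadd_inv[OF C A u] by blast
  have "ezero X C A = eadd X C A (eadd X C A u u) u'" using uu u' by simp
  also have "\<dots> = eadd X C A u (eadd X C A u u')" using eadd_assoc C A u u' by blast
  also have "\<dots> = eadd X C A u (ezero X C A)" using u' by simp
  also have "\<dots> = eadd X C A (ezero X C A) u" using eadd_comm C A u ezero_ext by blast
  also have "\<dots> = u" using eadd_zero C A u by blast
  finally show ?thesis by simp
qed

lemma push_zero:
  assumes C: "C \<in> Ob X" and a: "a \<in> hom X A A'"
  shows "push X C a (ezero X C A) = ezero X C A'"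
proof -
  have A: "A \<in> Ob X" and A': "A' \<in> Ob X" using hom_ob a by auto
  have z: "ezero X C A \<in> Ext X C A" using ezero_ext C A by blast
  have zz: "eadd X C A (ezero X C A) (ezero X C A) = ezero X C A" using eadd_zero C A z by blast
  have "push X C a (ezero X C A) = eadd X C A' (push X C a (ezero X C A)) (push X C a (ezero X C A))"
    using push_add[OF C a z z] zz by simp
  then show ?thesis using ext_cancel[OF C A' push_ext[OF C a z]] by simp
qed

lemma pull_mzero:
  assumes A: "A \<in> Ob X" and C: "C \<in> Ob X" and C': "C' \<in> Ob X" and d: "d \<in> Ext X C A"
  shows "pull X (mzero X C' C) A d = ezero X C' A"
proof -
  have z: "mzero X C' C \<in> hom X C' C" using mzero_hom C C' by blast
  have "pull X (mzero X C' C) A d = pull X (madd X (mzero X C' C) (mzero X C' C)) A d"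
    using madd_zero[OF z] by simp
  also have "\<dots> = eadd X C' A (pull X (mzero X C' C) A d) (pull X (mzero X C' C) A d)"
    using pull_madd[OF A z z d] .
  finally show ?thesis using ext_cancel[OF C' A pull_ext[OF A z d]] by simp
qed

lemma lift_lemma:
  assumes t1: "etri X K P C k p g" and t2: "etri X A Y C a b th"
    and z: "pull X p A th = ezero X P A"
  shows "\<exists>f\<in>hom X K A. push X C f g = th"
proof -
  have ob: "K \<in> Ob X" "P \<in> Ob X" "C \<in> Ob X" "A \<in> Ob X" "Y \<in> Ob X"
    and hs: "k \<in> hom X K P" "p \<in> hom X P C" "a \<in> hom X A Y" "b \<in> hom X Y C"
    and es: "g \<in> Ext X C K" "th \<in> Ext X C A"
    using t1 t2 unfolding etri_def by auto
  obtain S p1 p2 i1 i2 where bp: "biproduct X A P S p1 p2 i1 i2" using biprod_ex ob by blast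
  have bph: "i1 \<in> hom X A S" "i2 \<in> hom X P S" "p2 \<in> hom X S P" "cmp X p2 i2 = idt X P"
    using bp unfolding biproduct_def by auto
  have r0: "rlz X P A (ezero X P A) i1 p2" using split_rlz[OF ob(4) ob(2) bp] .
  have "push X P (idt X A) (ezero X P A) = pull X p A th"
    using push_id ob ezero_ext z by simp
  then obtain b' where b': "b' \<in> hom X (tgt X i1) (tgt X a)" "cmp X b b' = cmp X p p2"
    using rlz_mor[OF ezero_ext[OF ob(2) ob(4)] es(2) idt_hom[OF ob(4)] hs(2) _ r0 etri_rlz[OF t2]]
    by blast
  have b'h: "b' \<in> hom X S Y" using b' bph hs unfolding hom_def by auto
  define q where "q = cmp X b' i2"
  have qh: "q \<in> hom X P Y" unfolding q_def using cmp_hom bph b'h by blast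
  have "cmp X b q = cmp X (cmp X b b') i2" unfolding q_def using assoc bph b'h hs by blast
  also have "\<dots> = cmp X (cmp X p p2) i2" using b' by simp
  also have "\<dots> = cmp X p (cmp X p2 i2)" using assoc bph hs by metis
  also have "\<dots> = p" using bph idr hs by simp
  finally have "cmp X b q = cmp X (idt X C) p" using idl hs by simp
  then obtain f where f: "f \<in> hom X K A" "push X C f g = pull X (idt X C) A th"
    using et3op[OF t1 t2 qh idt_hom[OF ob(3)]] by blast
  then show ?thesis using pull_id ob es by auto
qed

lemma colift_lemma:
  assumes t1: "etri X K B' C' e y' dl" and t2: "etri X K Z Xo u v eps"
    and z: "push X Xo e eps = ezero X Xo B'"
  shows "\<exists>g\<in>hom X Xo C'. eps = pull X g K dl"
proof -
  have ob: "K \<in> Ob X" "B' \<in> Ob X" "C' \<in> Ob X" "Z \<in> Ob X" "Xo \<in> Ob X"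
    and hs: "e \<in> hom X K B'" "y' \<in> hom X B' C'" "u \<in> hom X K Z" "v \<in> hom X Z Xo"
    and es: "dl \<in> Ext X C' K" "eps \<in> Ext X Xo K"
    using t1 t2 unfolding etri_def by auto
  obtain S p1 p2 i1 i2 where bp: "biproduct X B' Xo S p1 p2 i1 i2" using biprod_ex ob by blast
  have bph: "i1 \<in> hom X B' S" "p1 \<in> hom X S B'" "p2 \<in> hom X S Xo" "cmp X p1 i1 = idt X B'"
    using bp unfolding biproduct_def by auto
  have r0: "rlz X Xo B' (ezero X Xo B') i1 p2" using split_rlz[OF ob(2) ob(5) bp] .
  have "push X Xo e eps = pull X (idt X Xo) B' (ezero X Xo B')"
    using pull_id ob ezero_ext z by simp
  then obtain w where w: "w \<in> hom X (tgt X u) (tgt X i1)" "cmp X w u = cmp X i1 e"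
    using rlz_mor[OF es(2) ezero_ext[OF ob(5) ob(2)] hs(1) idt_hom[OF ob(5)] _ etri_rlz[OF t2] r0]
    by blast
  have wh: "w \<in> hom X Z S" using w bph hs unfolding hom_def by auto
  define r where "r = cmp X p1 w"
  have rh: "r \<in> hom X Z B'" unfolding r_def using cmp_hom bph wh by blast
  have "cmp X r u = cmp X p1 (cmp X w u)" unfolding r_def using assoc bph wh hs by metis
  also have "\<dots> = cmp X p1 (cmp X i1 e)" using w by simp
  also have "\<dots> = cmp X (cmp X p1 i1) e" using assoc bph hs by metis
  also have "\<dots> = e" using bph idl hs by simp
  finally have "cmp X r u = cmp X e (idt X K)" using idr hs by simp
  then obtain g where g: "g \<in> hom X Xo C'" "push X Xo (idt X K) eps = pull X g K dl"
    using et3[OF t2 t1 idt_hom[OF ob(1)] rh] by blast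
  then show ?thesis using push_id ob es by auto
qed

lemma pull_defl:
  assumes t: "etri X A B C x y d"
  shows "pull X y A d = ezero X B A"
proof -
  have ob: "A \<in> Ob X" "B \<in> Ob X" "C \<in> Ob X" and hs: "x \<in> hom X A B" "y \<in> hom X B C"
    using t unfolding etri_def by auto
  obtain S p1 p2 i1 i2 where bp: "biproduct X A B S p1 p2 i1 i2" using biprod_ex ob by blast
  have bph: "S \<in> Ob X" "i1 \<in> hom X A S" "p2 \<in> hom X S B"
    using bp unfolding biproduct_def by auto
  have t0: "etri X A S B i1 p2 (ezero X B A)"
    unfolding etri_def using split_rlz[OF ob(1) ob(2) bp] bph ob ezero_ext by blast
  obtain a where a: "a \<in> hom X A A" "push X B a (ezero X B A) = pull X y A d"
    using et3op[OF t0 t bph(3) hs(2)] by blast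
  then show ?thesis using push_zero ob by metis
qed

end

lemma Ph_ideal:
  assumes ext: "extriangulated X" and sf: "additive_subfunctor X Fs"
  shows "ideal X (Ph X Fs)"
proof -
  have sfz: "\<And>C A. C \<in> Ob X \<Longrightarrow> A \<in> Ob X \<Longrightarrow> ezero X C A \<in> Fs C A"
    and sfa: "\<And>C A d d'. C \<in> Ob X \<Longrightarrow> A \<in> Ob X \<Longrightarrow> d \<in> Fs C A \<Longrightarrow> d' \<in> Fs C A \<Longrightarrow> eadd X C A d d' \<in> Fs C A"
    and sfp: "\<And>A C C' c d. A \<in> Ob X \<Longrightarrow> c \<in> hom X C' C \<Longrightarrow> d \<in> Fs C A \<Longrightarrow> pull X c A d \<in> Fs C' A"
    using sf unfolding additive_subfunctor_def by blast+
  have "Ph X Fs \<subseteq> Mor X" unfolding Ph_def by blast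
  moreover have "\<forall>A\<in>Ob X. \<forall>B\<in>Ob X. mzero X A B \<in> Ph X Fs"
  proof (intro ballI)
    fix A B assume A: "A \<in> Ob X" and B: "B \<in> Ob X"
    have z: "mzero X A B \<in> hom X A B" using mzero_hom[OF ext A B] .
    show "mzero X A B \<in> Ph X Fs" unfolding Ph_def
    proof (intro CollectI conjI ballI)
      show "mzero X A B \<in> Mor X" using z unfolding hom_def by blast
      fix A' d assume A': "A' \<in> Ob X" and d: "d \<in> Ext X (tgt X (mzero X A B)) A'"
      have "tgt X (mzero X A B) = B" "src X (mzero X A B) = A" using z unfolding hom_def by auto
      then show "pull X (mzero X A B) A' d \<in> Fs (src X (mzero X A B)) A'"
        using pull_mzero[OF ext A' B A] d sfz A A' by simp
    qed
  qed
  moreover have "\<forall>A B. \<forall>f\<in>hom X A B. \<forall>g\<in>hom X A B. f \<in> Ph X Fs \<and> g \<in> Ph X Fs \<longrightarrow> madd X f g \<in> Ph X Fs"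
  proof (intro allI ballI impI)
    fix A B f g assume f: "f \<in> hom X A B" and g: "g \<in> hom X A B" and fg: "f \<in> Ph X Fs \<and> g \<in> Ph X Fs"
    have h: "madd X f g \<in> hom X A B" using madd_hom[OF ext f g] .
    have ob: "A \<in> Ob X" "B \<in> Ob X" using hom_ob[OF ext f] by auto
    show "madd X f g \<in> Ph X Fs" unfolding Ph_def
    proof (intro CollectI conjI ballI)
      show "madd X f g \<in> Mor X" using h unfolding hom_def by blast
      fix A' d assume A': "A' \<in> Ob X" and d: "d \<in> Ext X (tgt X (madd X f g)) A'"
      have d': "d \<in> Ext X B A'" using d h unfolding hom_def by auto
      have "pull X f A' d \<in> Fs A A'" "pull X g A' d \<in> Fs A A'"
        using fg d' f g A' unfolding Ph_def hom_def by auto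
      then have "pull X (madd X f g) A' d \<in> Fs A A'"
        using pull_madd[OF ext A' f g d'] sfa ob A' by simp
      then show "pull X (madd X f g) A' d \<in> Fs (src X (madd X f g)) A'"
        using h unfolding hom_def by auto
    qed
  qed
  moreover have "\<forall>f\<in>Ph X Fs. \<forall>g\<in>Mor X. src X g = tgt X f \<longrightarrow> cmp X g f \<in> Ph X Fs"
  proof (intro ballI impI)
    fix f g assume f: "f \<in> Ph X Fs" and g: "g \<in> Mor X" and sg: "src X g = tgt X f"
    have fh: "f \<in> hom X (src X f) (tgt X f)" using f unfolding Ph_def hom_def by auto
    have gh: "g \<in> hom X (tgt X f) (tgt X g)" using g sg unfolding hom_def by auto
    have h: "cmp X g f \<in> hom X (src X f) (tgt X g)" using cmp_hom[OF ext fh gh] .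
    show "cmp X g f \<in> Ph X Fs" unfolding Ph_def
    proof (intro CollectI conjI ballI)
      show "cmp X g f \<in> Mor X" using h unfolding hom_def by blast
      fix A' d assume A': "A' \<in> Ob X" and d: "d \<in> Ext X (tgt X (cmp X g f)) A'"
      have d': "d \<in> Ext X (tgt X g) A'" using d h unfolding hom_def by auto
      have pg: "pull X g A' d \<in> Ext X (tgt X f) A'" using pull_ext[OF ext A' gh d'] .
      have "pull X f A' (pull X g A' d) \<in> Fs (src X f) A'" using f pg A' unfolding Ph_def by auto
      then show "pull X (cmp X g f) A' d \<in> Fs (src X (cmp X g f)) A'"
        using pull_cmp[OF ext A' gh fh d'] h unfolding hom_def by auto
    qed
  qed
  moreover have "\<forall>f\<in>Ph X Fs. \<forall>g\<in>Mor X. tgt X g = src X f \<longrightarrow> cmp X f g \<in> Ph X Fs"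
  proof (intro ballI impI)
    fix f g assume f: "f \<in> Ph X Fs" and g: "g \<in> Mor X" and sg: "tgt X g = src X f"
    have fh: "f \<in> hom X (src X f) (tgt X f)" using f unfolding Ph_def hom_def by auto
    have gh: "g \<in> hom X (src X g) (src X f)" using g sg unfolding hom_def by auto
    have h: "cmp X f g \<in> hom X (src X g) (tgt X f)" using cmp_hom[OF ext gh fh] .
    show "cmp X f g \<in> Ph X Fs" unfolding Ph_def
    proof (intro CollectI conjI ballI)
      show "cmp X f g \<in> Mor X" using h unfolding hom_def by blast
      fix A' d assume A': "A' \<in> Ob X" and d: "d \<in> Ext X (tgt X (cmp X f g)) A'"
      have d': "d \<in> Ext X (tgt X f) A'" using d h unfolding hom_def by auto
      have "pull X f A' d \<in> Fs (src X f) A'" using f d' A' unfolding Ph_def by auto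
      then have "pull X g A' (pull X f A' d) \<in> Fs (src X g) A'" using sfp A' gh by blast
      then show "pull X (cmp X f g) A' d \<in> Fs (src X (cmp X f g)) A'"
        using pull_cmp[OF ext A' fh gh d'] h unfolding hom_def by auto
    qed
  qed
  ultimately show ?thesis unfolding ideal_def by blast
qed

theorem theorem4p2:
  fixes X :: "('o,'m,'e) ecat" and Fs :: "'o \<Rightarrow> 'o \<Rightarrow> 'e set"
  assumes "extriangulated X"
    and "enough_projective_morphisms X"
    and "additive_subfunctor X Fs"
    and "enough_injective_morphisms X Fs"
  shows "special_precovering_ideal X (Ph X Fs)"
proof -
  note ext = assms(1)
  have sfp: "\<And>A C C' c d. A \<in> Ob X \<Longrightarrow> c \<in> hom X C' C \<Longrightarrow> d \<in> Fs C A \<Longrightarrow> pull X c A d \<in> Fs C' A"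
    and sfq: "\<And>C A A' a d. C \<in> Ob X \<Longrightarrow> a \<in> hom X A A' \<Longrightarrow> d \<in> Fs C A \<Longrightarrow> push X C a d \<in> Fs C A'"
    using assms(3) unfolding additive_subfunctor_def by blast+
  have "\<forall>C\<in>Ob X. \<exists>i. special_precover X (Ph X Fs) C i"
  proof
    fix C assume C: "C \<in> Ob X"
    obtain K P k p g where tp: "etri X K P C k p g"
      and pz: "\<forall>A\<in>Ob X. \<forall>d\<in>Ext X C A. pull X p A d = ezero X P A"
      using assms(2) C unfolding enough_projective_morphisms_def by blast
    have K: "K \<in> Ob X" and P: "P \<in> Ob X" and kh: "k \<in> hom X K P" and ph: "p \<in> hom X P C"
      and gE: "g \<in> Ext X C K"
      using tp unfolding etri_def by auto
    obtain B' C' e y' dl where ti: "etri X K B' C' e y' dl" and dlF: "dl \<in> Fs C' K"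
      and einj: "e \<in> F_inj X Fs"
      using assms(4) K unfolding enough_injective_morphisms_def by blast
    have B': "B' \<in> Ob X" and eh: "e \<in> hom X K B'" using ti unfolding etri_def by auto
    define eg where "eg = push X C e g"
    have egE: "eg \<in> Ext X C B'" unfolding eg_def using push_ext[OF ext C eh gE] .
    obtain Xo x' i where tx: "etri X B' Xo C x' i eg" using etri_ex[OF ext C B' egE] by blast
    have Xo: "Xo \<in> Ob X" and x'h: "x' \<in> hom X B' Xo" and ih: "i \<in> hom X Xo C"
      using tx unfolding etri_def by auto
    have eq1: "push X C e g = pull X (idt X C) B' eg"
      using pull_id[OF ext C B' egE] eg_def by simp
    obtain b where b: "b \<in> hom X (tgt X k) (tgt X x')" "cmp X b k = cmp X x' e" "cmp X i b = cmp X (idt X C) p"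
      using rlz_mor[OF ext gE egE eh idt_hom[OF ext C] eq1 etri_rlz[OF ext tp] etri_rlz[OF ext tx]] by blast
    have bh: "b \<in> hom X P (src X i)" using b kh x'h ih unfolding hom_def by auto
    have srci: "src X i = Xo" and tgti: "tgt X i = C" using ih unfolding hom_def by auto
    have iPh: "i \<in> Ph X Fs" unfolding Ph_def
    proof (intro CollectI conjI ballI)
      show "i \<in> Mor X" using ih unfolding hom_def by blast
      fix A th assume A: "A \<in> Ob X" and th: "th \<in> Ext X (tgt X i) A"
      have thE: "th \<in> Ext X C A" using th tgti by simp
      obtain Y a bb where tth: "etri X A Y C a bb th" using etri_ex[OF ext C A thE] by blast
      obtain f where fh: "f \<in> hom X K A" and f: "push X C f g = th"
        using lift_lemma[OF ext tp tth] pz A thE by blast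
      define eps where "eps = pull X i K g"
      have epsE: "eps \<in> Ext X Xo K" unfolding eps_def using pull_ext[OF ext K ih gE] .
      obtain Z u v where teps: "etri X K Z Xo u v eps" using etri_ex[OF ext Xo K epsE] by blast
      have "push X Xo e eps = pull X i B' eg" unfolding eps_def eg_def using push_pull[OF ext eh ih gE] .
      also have "\<dots> = ezero X Xo B'" using pull_defl[OF ext tx] .
      finally obtain gg where ggh: "gg \<in> hom X Xo C'" and gg: "eps = pull X gg K dl"
        using colift_lemma[OF ext ti teps] by blast
      have epsF: "eps \<in> Fs Xo K" using gg sfp[OF K ggh dlF] by simp
      have "pull X i A th = push X Xo f eps"
        unfolding eps_def using push_pull[OF ext fh ih gE] f by simp
      then show "pull X i A th \<in> Fs (src X i) A" using sfq[OF Xo fh epsF] srci by simp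
    qed
    have eperp: "e \<in> perpE X (Ph X Fs)" unfolding perpE_def
    proof (intro CollectI conjI ballI)
      show "e \<in> Mor X" using eh unfolding hom_def by blast
      fix m d assume m: "m \<in> Ph X Fs" and d: "d \<in> Ext X (tgt X m) (src X e)"
      have mh: "m \<in> hom X (src X m) (tgt X m)" using m unfolding Ph_def hom_def by auto
      have sm: "src X m \<in> Ob X" using mor_ob[OF ext] m unfolding Ph_def by blast
      have se: "src X e = K" "tgt X e = B'" using eh unfolding hom_def by auto
      have dK: "d \<in> Ext X (tgt X m) K" using d se by simp
      have pF: "pull X m K d \<in> Fs (src X m) K" using m K dK unfolding Ph_def by blast
      have "pull X m (tgt X e) (push X (tgt X m) e d) = push X (src X m) e (pull X m K d)"
        using push_pull[OF ext eh mh dK] se by simp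
      also have "\<dots> = ezero X (src X m) (tgt X e)"
        using einj sm pF se unfolding F_inj_def by auto
      finally show "pull X m (tgt X e) (push X (tgt X m) e d) = ezero X (src X m) (tgt X e)" .
    qed
    have "special_precover X (Ph X Fs) C i"
      unfolding special_precover_def
    proof (intro conjI exI)
      show "etri X K P C k p g" by (rule tp)
      show "etri X B' (src X i) C x' i eg" using tx srci by simp
      show "e \<in> hom X K B'" by (rule eh)
      show "b \<in> hom X P (src X i)" by (rule bh)
      show "cmp X b k = cmp X x' e" using b by simp
      show "cmp X i b = cmp X (idt X C) p" using b by simp
      show "push X C e g = pull X (idt X C) B' eg" by (rule eq1)
      show "e \<in> perpE X (Ph X Fs)" by (rule eperp)
      show "i \<in> Ph X Fs" by (rule iPh)
      show "tgt X i = C" by (rule tgti)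
    qed
    then show "\<exists>i. special_precover X (Ph X Fs) C i" by blast
  qed
  then show ?thesis unfolding special_precovering_ideal_def using Ph_ideal[OF ext assms(3)] by blast
qed

end
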